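(* Let $b\ge2$ be an integer, $\lambda\in(1/b,1)$, $D=2+\log_b\lambda$, and let $\phi$ be a $\mathbb{Z}$-periodic Lipschitz function such that $W=W^\phi_{\lambda,b}$ is not Lipschitz. Then there exist constants $t_0>0$ and $C_0>0$ such that for every nonzero $C^2$-regulating period $t$ of $W$, either $|t|>t_0$ or $E_2(t)\,|t|^D\ge C_0$.
   Context: $W^\phi_{\lambda,b}(x)=\sum_{n\ge0}\lambda^n\phi(b^nx)$. For $k\in\mathbb{Z}_+$, a real number $t$ is a $C^k$-regulating period of $W$ if $x\mapsto W(x+t)-W(x)$ is a $C^k$ function; in this case $E_k(t)=\sup_{x\in\mathbb{R}}\left|\frac{d^k}{dx^k}\big(W(x+t)-W(x)\big)\right|$. *)

theory Defs
  imports "HOL-Analysis.Analysis"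
begin

definition W :: "(real \<Rightarrow> real) \<Rightarrow> real \<Rightarrow> real \<Rightarrow> real \<Rightarrow> real" where
  "W \<phi> lam b x = (\<Sum>n. lam ^ n * \<phi> (b ^ n * x))"

definition Ck :: "nat \<Rightarrow> (real \<Rightarrow> real) \<Rightarrow> bool" where
  "Ck k g \<longleftrightarrow> (\<forall>j<k. \<forall>x. ((deriv ^^ j) g) differentiable (at x))
                 \<and> continuous_on UNIV ((deriv ^^ k) g)"

definition regulating_period :: "nat \<Rightarrow> (real \<Rightarrow> real) \<Rightarrow> real \<Rightarrow> bool" where
  "regulating_period k f t \<longleftrightarrow> Ck k (\<lambda>x. f (x + t) - f x)"

text \<open>E_k(t), as an extended real (the supremum may be infinite).\<close>
definition E :: "nat \<Rightarrow> (real \<Rightarrow> real) \<Rightarrow> real \<Rightarrow> ereal" where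
  "E k f t = (SUP x\<in>UNIV. ereal \<bar>(deriv ^^ k) (\<lambda>y. f (y + t) - f y) x\<bar>)"

end

theory Submission
  imports Defs
begin

lemma mvt_bound:
  assumes "a \<le> c" "\<And>u. a \<le> u \<Longrightarrow> u \<le> c \<Longrightarrow> (f has_real_derivative f' u) (at u)"
    "\<And>u. a \<le> u \<Longrightarrow> u \<le> c \<Longrightarrow> \<bar>f' u\<bar> \<le> B"
  shows "\<bar>f c - f a\<bar> \<le> B * (c - a)"
proof (cases "a = c")
  case True thus ?thesis by simp
next
  case False
  then have "a < c" using assms(1) by simp
  from MVT2[OF this assms(2)] obtain z where z: "a < z" "z < c" "f c - f a = (c - a) * f' z" by blast
  then have "\<bar>f c - f a\<bar> = (c - a) * \<bar>f' z\<bar>" by (simp add: abs_mult)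
  also have "\<dots> \<le> (c - a) * B" using assms(3)[of z] z by (intro mult_left_mono) auto
  finally show ?thesis by (simp add: mult.commute)
qed

lemma mvt_bound2:
  assumes "\<And>u. (f has_real_derivative f' u) (at u)"
    "\<And>u. \<bar>u - a\<bar> \<le> \<bar>c - a\<bar> \<Longrightarrow> \<bar>f' u\<bar> \<le> B"
  shows "\<bar>f c - f a\<bar> \<le> B * \<bar>c - a\<bar>"
proof (cases "a \<le> c")
  case True
  have "\<bar>f c - f a\<bar> \<le> B * (c - a)"
    by (rule mvt_bound[OF True assms(1)]) (use assms(2) True in auto)
  then show ?thesis using True by simp
next
  case False
  have "\<bar>f a - f c\<bar> \<le> B * (a - c)"
    by (rule mvt_bound[of c a, OF _ assms(1)]) (use assms(2) False in auto)
  then show ?thesis using False by (simp add: abs_minus_commute)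
qed

lemma taylor2:
  fixes g :: "real \<Rightarrow> real"
  assumes d1: "\<And>x. g differentiable at x" and d2: "\<And>x. deriv g differentiable at x"
    and bd: "\<And>x. \<bar>deriv (deriv g) x\<bar> \<le> e"
  shows "\<bar>g x - g 0 - deriv g 0 * x\<bar> \<le> e * x^2"
proof -
  have D1: "(g has_real_derivative deriv g u) (at u)" for u
    using d1 DERIV_deriv_iff_real_differentiable by blast
  have D2: "(deriv g has_real_derivative deriv (deriv g) u) (at u)" for u
    using d2 DERIV_deriv_iff_real_differentiable by blast
  have e0: "e \<ge> 0" using bd[of 0] by linarith
  have b1: "\<bar>deriv g u - deriv g 0\<bar> \<le> e * \<bar>u\<bar>" for u
    using mvt_bound2[of "deriv g" "deriv (deriv g)" 0 u e, OF D2 bd] by simp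
  define k where "k u = g u - deriv g 0 * u" for u
  have Dk: "(k has_real_derivative (deriv g u - deriv g 0)) (at u)" for u
    unfolding k_def by (auto intro!: derivative_eq_intros D1)
  have "\<bar>k x - k 0\<bar> \<le> (e * \<bar>x\<bar>) * \<bar>x - 0\<bar>"
  proof (rule mvt_bound2[OF Dk])
    fix u assume "\<bar>u - 0\<bar> \<le> \<bar>x - 0\<bar>"
    then show "\<bar>deriv g u - deriv g 0\<bar> \<le> e * \<bar>x\<bar>"
      using b1[of u] e0 by (smt (verit) mult_left_mono)
  qed
  then show ?thesis by (simp add: k_def power2_eq_square abs_mult_self_eq mult.assoc)
qed


lemma exists_m:
  fixes bb a :: real
  assumes bb: "bb > 1" and a: "a > 0" "a \<le> 1 / bb ^ Suc n"
  shows "\<exists>m\<ge>Suc n. 1 \<le> bb^m * a \<and> bb^m * a < bb"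
proof -
  obtain k where k: "1 / a < bb ^ k" using real_arch_pow[OF bb] by blast
  have ex: "\<exists>m. 1 \<le> bb^m * a" using k a by (intro exI[of _ k]) (simp add: field_simps)
  define m where "m = (LEAST m. 1 \<le> bb^m * a)"
  have m1: "1 \<le> bb^m * a" unfolding m_def by (rule LeastI_ex[OF ex])
  have small: "bb^j * a < 1" if "j < Suc n" for j
  proof -
    have "bb^j < bb^Suc n" using that bb by (intro power_strict_increasing) auto
    hence "bb^j * a < bb^Suc n * a" using a by simp
    also have "\<dots> \<le> 1" using a bb by (simp add: field_simps)
    finally show ?thesis .
  qed
  have mge: "m \<ge> Suc n"
  proof (rule ccontr)
    assume "\<not> m \<ge> Suc n" hence "m < Suc n" by simp
    from small[OF this] m1 show False by simp
  qed
  obtain j where j: "m = Suc j" using mge by (cases m) auto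
  have "\<not> 1 \<le> bb^j * a" using not_less_Least[of j "\<lambda>m. 1 \<le> bb^m * a"] j unfolding m_def by simp
  hence "bb^j * a < 1" by simp
  hence "bb * (bb^j * a) < bb * 1" using bb by (intro mult_strict_left_mono) auto
  hence "bb^m * a < bb" using j by (simp add: mult.assoc)
  with m1 mge show ?thesis by blast
qed

lemma powr_est:
  fixes bb lam a :: real
  assumes bb: "bb > 1" and lam: "0 < lam" "lam < 1" and a: "a > 0"
    and m1: "1 \<le> bb^m * a" and m2: "bb^m * a < bb"
  shows "a powr (2 + log bb lam) \<ge> lam * (1/lam)^m / bb^(2*m)"
proof -
  have bm: "bb^m > 0" using bb by simp
  have "a powr (2 + log bb lam) = a powr 2 * a powr (log bb lam)" by (rule powr_add)
  also have "a powr 2 = a^2" using a by (simp add: powr_numeral)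
  also have "a powr (log bb lam) = lam powr (log bb a)"
    using a lam bb by (simp add: powr_def log_def mult.commute)
  finally have eq: "a powr (2 + log bb lam) = a^2 * lam powr (log bb a)" .
  have a1: "a \<ge> 1 / bb^m" using m1 bm by (simp add: field_simps)
  have a2: "a^2 \<ge> 1 / bb^(2*m)"
  proof -
    have "(1/bb^m)^2 \<le> a^2" using a1 bm by (intro power_mono) auto
    thus ?thesis by (simp add: power_mult power_divide mult.commute)
  qed
  have "a < bb / bb^m" using m2 bm by (simp add: field_simps)
  also have "bb / bb^m = bb powr (1 - real m)" using bb by (simp add: powr_diff powr_realpow)
  finally have "log bb a < 1 - real m" using bb a by (simp add: log_less_iff)
  hence "lam powr (log bb a) \<ge> lam powr (1 - real m)"
    using lam by (simp add: powr_def mult_left_mono_neg ln_less_zero)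
  also have "lam powr (1 - real m) = lam * (1/lam)^m" using lam by (simp add: powr_diff powr_realpow power_one_over)
  finally have l2: "lam powr (log bb a) \<ge> lam * (1/lam)^m" .
  have "lam * (1/lam)^m / bb^(2*m) = (1 / bb^(2*m)) * (lam * (1/lam)^m)" by simp
  also have "\<dots> \<le> a^2 * lam powr (log bb a)"
    using a2 l2 lam by (intro mult_mono) auto
  finally show ?thesis using eq by simp
qed
locale WS =
  fixes b :: nat and lam :: real and \<phi> :: "real \<Rightarrow> real" and L :: real
  assumes b2: "b \<ge> 2" and lam_gt: "1 / real b < lam" and lam_lt: "lam < 1"
   and per: "\<forall>x. \<phi> (x+1) = \<phi> x" and lip: "L-lipschitz_on UNIV \<phi>"
begin

lemma bpos: "real b > 1" using b2 by simp
lemma lam_pos: "lam > 0" using lam_gt b2 by (smt (verit) divide_pos_pos of_nat_0_less_iff zero_less_numeral le_trans pos2 less_le_trans)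
lemma lamb: "lam * real b > 1" using lam_gt bpos by (simp add: field_simps)
lemma L_nn: "L \<ge> 0" using lip lipschitz_on_nonneg by blast
lemma phi_lip: "\<bar>\<phi> x - \<phi> y\<bar> \<le> L * \<bar>x - y\<bar>"
  using lipschitz_onD[OF lip, of x y] by (simp add: dist_real_def)
lemma phi_cont: "continuous_on UNIV \<phi>"
  using lip lipschitz_on_continuous_on by blast

lemma per_nat: "\<phi> (x + real n) = \<phi> x"
  by (induction n arbitrary: x) (auto simp: per add.assoc[symmetric])

lemma phi_frac: "\<phi> x = \<phi> (frac x)"
proof (cases "\<lfloor>x\<rfloor> \<ge> 0")
  case True
  have "x = frac x + real (nat \<lfloor>x\<rfloor>)" using True by (simp add: frac_def)
  then show ?thesis using per_nat by metis
next
  case False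
  have "frac x = x + real (nat (-\<lfloor>x\<rfloor>))" using False by (simp add: frac_def)
  then show ?thesis using per_nat by metis
qed

lemma phi_bdd: "\<exists>M. \<forall>x. \<bar>\<phi> x\<bar> \<le> M"
proof -
  have "compact (\<phi> ` {0..1})"
    by (rule compact_continuous_image) (auto intro: continuous_on_subset[OF phi_cont])
  then obtain M where M: "\<forall>y\<in>\<phi> ` {0..1}. norm y \<le> M"
    using compact_imp_bounded bounded_iff by blast
  have "\<bar>\<phi> x\<bar> \<le> M" for x
  proof -
    have "frac x \<in> {0..1}" using frac_lt_1[of x] frac_ge_0[of x] by auto
    then show ?thesis using M phi_frac[of x] by force
  qed
  then show ?thesis by blast
qed


definition M0 where "M0 = (SOME M. \<forall>x. \<bar>\<phi> x\<bar> \<le> M)"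
lemma phiM: "\<bar>\<phi> x\<bar> \<le> M0" using someI_ex[OF phi_bdd] unfolding M0_def by blast
lemma M0_nn: "M0 \<ge> 0" using phiM[of 0] by linarith

lemma phi_cont' [continuous_intros]: "continuous_on S f \<Longrightarrow> continuous_on S (\<lambda>x. \<phi> (f x))"
  using continuous_on_compose2[OF phi_cont] by blast

abbreviation "Wb \<equiv> W \<phi> lam (real b)"

lemma W_term_bd: "norm (lam^n * \<phi> (real b^n * x)) \<le> M0 * lam^n"
proof -
  have "norm (lam^n * \<phi> (real b^n * x)) = lam^n * \<bar>\<phi> (real b^n * x)\<bar>"
    using lam_pos by (simp add: abs_mult)
  also have "\<dots> \<le> lam^n * M0" using phiM lam_pos by (intro mult_left_mono) auto
  finally show ?thesis by (simp add: mult.commute)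
qed

lemma geo: "summable (\<lambda>n. M0 * lam^n)"
  using lam_pos lam_lt by (intro summable_mult summable_geometric) auto

lemma W_summ: "summable (\<lambda>n. lam^n * \<phi> (real b^n * x))"
  by (rule summable_comparison_test'[OF geo]) (use W_term_bd in auto)

lemma W_bdd: "\<bar>Wb x\<bar> \<le> M0 / (1 - lam)"
proof -
  have "norm (Wb x) \<le> (\<Sum>n. M0 * lam^n)"
    unfolding W_def by (rule norm_suminf_le[OF W_term_bd geo])
  also have "\<dots> = M0 / (1 - lam)"
    using lam_pos lam_lt by (simp add: suminf_mult suminf_geometric divide_simps)
  finally show ?thesis by simp
qed

lemma W_eq: "Wb x = \<phi> x + lam * Wb (real b * x)"
proof -
  have "(\<Sum>n. lam^Suc n * \<phi> (real b^Suc n * x)) = Wb x - \<phi> x"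
    using suminf_split_head[OF W_summ[of x]] by (simp add: W_def)
  moreover have "(\<Sum>n. lam^Suc n * \<phi> (real b^Suc n * x)) = lam * Wb (real b * x)"
  proof -
    have "(\<Sum>n. lam^Suc n * \<phi> (real b^Suc n * x)) = (\<Sum>n. lam * (lam^n * \<phi> (real b^n * (real b * x))))"
      by (simp add: mult.assoc mult.left_commute)
    also have "\<dots> = lam * (\<Sum>n. lam^n * \<phi> (real b^n * (real b * x)))"
      by (rule suminf_mult[OF W_summ])
    finally show ?thesis by (simp add: W_def)
  qed
  ultimately show ?thesis by linarith
qed

lemma W_cont: "continuous_on UNIV Wb"
proof -
  have "uniform_limit UNIV (\<lambda>n x. \<Sum>i<n. lam^i * \<phi> (real b^i * x)) (\<lambda>x. \<Sum>i. lam^i * \<phi> (real b^i * x)) sequentially"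
    by (rule Weierstrass_m_test[OF W_term_bd geo])
  moreover have "\<forall>\<^sub>F n in sequentially. continuous_on UNIV (\<lambda>x. \<Sum>i<n. lam^i * \<phi> (real b^i * x))"
    by (intro always_eventually allI continuous_intros)
  ultimately have "continuous_on UNIV (\<lambda>x. \<Sum>i. lam^i * \<phi> (real b^i * x))"
    by (intro uniform_limit_theorem) auto
  moreover have "(\<lambda>x. \<Sum>i. lam^i * \<phi> (real b^i * x)) = Wb" by (simp add: W_def[abs_def])
  ultimately show ?thesis by metis
qed


definition q where "q = 1 / (lam * real b)"
lemma q_pos: "q > 0" using lamb by (simp add: q_def)
lemma q_lt1: "q < 1" using lamb by (simp add: q_def)

definition vt where "vt j y = (1/lam)^Suc j * (\<phi> (y / real b^Suc j) - \<phi> 0)"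
definition V where "V y = (\<Sum>j. vt j y)"
definition K where "K = L * q / (1 - q)"
lemma K_nn: "K \<ge> 0" using L_nn q_pos q_lt1 by (simp add: K_def)

lemma vt_diff: "\<bar>vt j y - vt j z\<bar> \<le> L * \<bar>y - z\<bar> * q^Suc j"
proof -
  define B where "B = real b ^ Suc j"
  have Bpos: "B > 0" using bpos by (simp add: B_def)
  have "vt j y - vt j z = (1/lam)^Suc j * (\<phi> (y / B) - \<phi> (z / B))"
    by (simp add: vt_def B_def algebra_simps)
  hence "\<bar>vt j y - vt j z\<bar> = (1/lam)^Suc j * \<bar>\<phi> (y / B) - \<phi> (z / B)\<bar>"
    using lam_pos by (simp add: abs_mult)
  also have "\<dots> \<le> (1/lam)^Suc j * (L * \<bar>y/B - z/B\<bar>)"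
    using lam_pos by (intro mult_left_mono phi_lip) auto
  also have "\<bar>y/B - z/B\<bar> = \<bar>y - z\<bar> / B" using Bpos by (simp add: diff_divide_distrib[symmetric])
  also have "(1/lam)^Suc j * (L * (\<bar>y - z\<bar> / B)) = L * \<bar>y - z\<bar> * ((1/lam)^Suc j / B)" by simp
  also have "(1/lam)^Suc j / B = q^Suc j" unfolding q_def B_def by (simp add: power_divide power_mult_distrib)
  finally show ?thesis .
qed

lemma qsum: "summable (\<lambda>j. c * q^Suc j)"
  using q_pos q_lt1 by (intro summable_mult) (simp add: summable_geometric)

lemma qsum_val: "(\<Sum>j. c * q^Suc j) = c * q / (1 - q)"
proof -
  have "(\<Sum>j. c * q^Suc j) = (c*q) * (\<Sum>j. q^j)"
    using q_pos q_lt1 by (subst suminf_mult[symmetric]) (auto simp: summable_geometric mult_ac)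
  also have "\<dots> = c * q / (1 - q)" using q_pos q_lt1 by (simp add: suminf_geometric)
  finally show ?thesis .
qed

lemma vt0: "vt j 0 = 0" by (simp add: vt_def)

lemma V_summ: "summable (\<lambda>j. vt j y)"
  by (rule summable_comparison_test'[OF qsum[of "L * \<bar>y\<bar>"]]) (use vt_diff[of _ y 0] in \<open>auto simp: vt0\<close>)

lemma V_lip: "\<bar>V y - V z\<bar> \<le> K * \<bar>y - z\<bar>"
proof -
  have "V y - V z = (\<Sum>j. vt j y - vt j z)" unfolding V_def using suminf_diff[OF V_summ[of y] V_summ[of z]] by simp
  also have "norm \<dots> \<le> (\<Sum>j. L * \<bar>y - z\<bar> * q^Suc j)"
    by (rule norm_suminf_le) (use vt_diff qsum in auto)
  also have "\<dots> = K * \<bar>y - z\<bar>" unfolding qsum_val K_def by simp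
  finally show ?thesis by simp
qed

lemma V_lipschitz: "K-lipschitz_on UNIV V"
  by (rule lipschitz_onI) (use V_lip K_nn in \<open>auto simp: dist_real_def\<close>)

lemma V_cont: "continuous_on UNIV V"
  using V_lipschitz lipschitz_on_continuous_on by blast

lemma V_eq: "lam * V (real b * y) = \<phi> y - \<phi> 0 + V y"
proof -
  have s: "summable (\<lambda>j. vt j (real b * y))" by (rule V_summ)
  have "V (real b * y) = vt 0 (real b * y) + (\<Sum>j. vt (Suc j) (real b * y))"
    using suminf_split_head[OF s] unfolding V_def by simp
  also have "vt 0 (real b * y) = (1/lam) * (\<phi> y - \<phi> 0)" using bpos by (simp add: vt_def)
  also have "(\<lambda>j. vt (Suc j) (real b * y)) = (\<lambda>j. (1/lam) * vt j y)"
  proof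
    fix j
    have "real b * y / real b ^ Suc (Suc j) = y / real b ^ Suc j" using bpos by (simp add: field_simps)
    then show "vt (Suc j) (real b * y) = (1/lam) * vt j y" unfolding vt_def by (simp add: mult_ac)
  qed
  also have "(\<Sum>j. (1/lam) * vt j y) = (1/lam) * V y" unfolding V_def by (rule suminf_mult[OF V_summ])
  finally have X: "V (real b * y) = (1/lam) * (\<phi> y - \<phi> 0) + (1/lam) * V y" .
  have "lam * V (real b * y) = lam * (1/lam) * (\<phi> y - \<phi> 0) + lam * (1/lam) * V y"
    unfolding X by (simp add: algebra_simps)
  then show ?thesis using lam_pos by simp
qed

definition U where "U y = Wb y + V y"

lemma U_eq: "lam * U (real b * y) = U y - \<phi> 0"
  using W_eq[of y] V_eq[of y] by (simp add: U_def algebra_simps)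

lemma U_iter: "lam^m * (U (real b^m * y) - U (real b^m * z)) = U y - U z"
proof (induction m arbitrary: y z)
  case 0 then show ?case by simp
next
  case (Suc m)
  have "lam^Suc m * (U (real b^Suc m * y) - U (real b^Suc m * z))
      = lam^m * (lam * U (real b * (real b^m * y)) - lam * U (real b * (real b^m * z)))"
    by (simp add: algebra_simps)
  also have "\<dots> = lam^m * (U (real b^m * y) - U (real b^m * z))" by (simp add: U_eq)
  finally show ?case using Suc by simp
qed

lemma U_cont: "continuous_on UNIV U"
  unfolding U_def[abs_def] by (intro continuous_on_add W_cont V_cont)


lemma step:
  fixes t :: real and n :: nat
  assumes tnz: "t \<noteq> 0" and tsm: "\<bar>t\<bar> \<le> 1 / real b ^ Suc n"
    and reg: "regulating_period 2 Wb t"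
    and Ebd: "E 2 Wb t * ereal (\<bar>t\<bar> powr (2 + log (real b) lam)) < ereal (1 / real (Suc n))"
  shows "\<exists>s c. 1 \<le> \<bar>s\<bar> \<and> \<bar>s\<bar> \<le> real b \<and> (\<forall>y. \<bar>U (y+s) - U y - (U s - U 0) - c*y\<bar> \<le> 1/(lam * real (Suc n)) * y^2 + 2*K*q^Suc n * \<bar>y\<bar>)"
proof -
  define g where "g x = Wb (x + t) - Wb x" for x
  have Ck: "Ck 2 g" using reg by (simp add: regulating_period_def g_def[abs_def])
  have A: "\<forall>j<2. \<forall>x. (deriv^^j) g differentiable (at x)" using Ck unfolding Ck_def by blast
  have d1: "g differentiable (at x)" for x using A[rule_format, of 0 x] by simp
  have d2: "deriv g differentiable (at x)" for x using A[rule_format, of 1 x] by simp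
  define p where "p = \<bar>t\<bar> powr (2 + log (real b) lam)"
  have ppos: "p > 0" using tnz by (simp add: p_def)
  define e where "e = (1 / real (Suc n)) / p"
  have Eeq: "E 2 Wb t = (SUP x\<in>UNIV. ereal \<bar>deriv (deriv g) x\<bar>)"
    by (simp add: E_def numeral_2_eq_2 g_def[abs_def])
  have bd: "\<bar>deriv (deriv g) x\<bar> \<le> e" for x
  proof -
    have "ereal \<bar>deriv (deriv g) x\<bar> \<le> E 2 Wb t" unfolding Eeq by (rule SUP_upper) simp
    hence "ereal \<bar>deriv (deriv g) x\<bar> * ereal p \<le> E 2 Wb t * ereal p"
      by (rule ereal_mult_right_mono) (use ppos in simp)
    hence "ereal (\<bar>deriv (deriv g) x\<bar> * p) \<le> E 2 Wb t * ereal p" by simp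
    hence "ereal (\<bar>deriv (deriv g) x\<bar> * p) < ereal (1 / real (Suc n))"
      using Ebd unfolding p_def by (rule order.strict_trans1)
    hence "\<bar>deriv (deriv g) x\<bar> * p < 1 / real (Suc n)" by simp
    hence "\<bar>deriv (deriv g) x\<bar> * p \<le> 1 / real (Suc n)" by simp
    thus ?thesis using ppos unfolding e_def by (simp add: pos_le_divide_eq mult_ac)
  qed
  have tay: "\<bar>g x - g 0 - deriv g 0 * x\<bar> \<le> e * x^2" for x by (rule taylor2[OF d1 d2 bd])
  obtain m where m: "m \<ge> Suc n" "1 \<le> real b^m * \<bar>t\<bar>" "real b^m * \<bar>t\<bar> < real b"
    using exists_m[of "real b" "\<bar>t\<bar>" n] bpos tnz tsm by auto
  have pe: "p \<ge> lam * (1/lam)^m / real b^(2*m)" unfolding p_def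
    by (rule powr_est) (use bpos lam_pos lam_lt tnz m in auto)
  define s where "s = real b^m * t"
  define c where "c = (1/lam)^m * deriv g 0 / real b^m"
  have bm: "real b^m > 0" using bpos by simp
  have "1 \<le> \<bar>s\<bar>" "\<bar>s\<bar> \<le> real b" using m bm by (auto simp: s_def abs_mult)
  moreover have "\<bar>U (y+s) - U y - (U s - U 0) - c*y\<bar> \<le> 1/(lam * real (Suc n)) * y^2 + 2*K*q^Suc n * \<bar>y\<bar>" for y
  proof -
    define z where "z = y / real b^m"
    have yz: "y = real b^m * z" using bm by (simp add: z_def)
    have i1: "lam^m * (U (y+s) - U y) = U (z+t) - U z"
      using U_iter[of m "z+t" z] by (simp add: yz s_def distrib_left)
    have i2: "lam^m * (U s - U 0) = U t - U 0" using U_iter[of m t 0] by (simp add: s_def)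
    have cy: "lam^m * (c*y) = deriv g 0 * z" unfolding c_def z_def using lam_pos
      by (simp add: power_one_over field_simps)
    have "lam^m * (U (y+s) - U y - (U s - U 0) - c*y) = lam^m * (U (y+s) - U y) - lam^m * (U s - U 0) - lam^m * (c*y)"
      by (simp add: algebra_simps)
    also have "\<dots> = (g z - g 0 - deriv g 0 * z) + ((V (z+t) - V t) - (V z - V 0))"
      unfolding i1 i2 cy by (simp add: U_def g_def algebra_simps)
    finally have X: "lam^m * (U (y+s) - U y - (U s - U 0) - c*y) = (g z - g 0 - deriv g 0 * z) + ((V (z+t) - V t) - (V z - V 0))" .
    have "\<bar>(g z - g 0 - deriv g 0 * z) + ((V (z+t) - V t) - (V z - V 0))\<bar> \<le> e * z^2 + 2 * K * \<bar>z\<bar>"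
      using tay[of z] V_lip[of "z+t" t] V_lip[of z 0] by simp
    hence "lam^m * \<bar>U (y+s) - U y - (U s - U 0) - c*y\<bar> \<le> e * z^2 + 2 * K * \<bar>z\<bar>"
      using X lam_pos by (simp add: abs_mult)
    hence Y: "\<bar>U (y+s) - U y - (U s - U 0) - c*y\<bar> \<le> (1/lam)^m * (e * z^2) + (1/lam)^m * (2 * K * \<bar>z\<bar>)"
      using lam_pos by (simp add: power_one_over field_simps)
    have t1: "(1/lam)^m * (e * z^2) \<le> 1/(lam * real (Suc n)) * y^2"
    proof -
      have "(1/lam)^m * (e * z^2) = ((1/lam)^m / (real b^(2*m) * p)) * (y^2 / real (Suc n))"
        unfolding e_def z_def using bm ppos by (simp add: field_simps power2_eq_square power_mult_distrib power_mult)
      also have "(1/lam)^m / (real b^(2*m) * p) \<le> 1 / lam"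
      proof -
        have B: "real b^(2*m) > 0" using bpos by simp
        have "lam * (1/lam)^m \<le> p * real b^(2*m)" using pe by (simp only: pos_divide_le_eq[OF B])
        hence "lam * (1/lam)^m \<le> real b^(2*m) * p" by (simp add: mult.commute)
        thus ?thesis using lam_pos bm ppos by (simp add: field_simps)
      qed
      hence "((1/lam)^m / (real b^(2*m) * p)) * (y^2 / real (Suc n)) \<le> (1/lam) * (y^2 / real (Suc n))"
        by (intro mult_right_mono) auto
      finally show ?thesis by simp
    qed
    have t2: "(1/lam)^m * (2 * K * \<bar>z\<bar>) \<le> 2*K*q^Suc n * \<bar>y\<bar>"
    proof -
      have "(1/lam)^m * (2 * K * \<bar>z\<bar>) = 2 * K * q^m * \<bar>y\<bar>"
        unfolding z_def q_def using bm lam_pos by (simp add: field_simps power_mult_distrib)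
      also have "q^m \<le> q^Suc n" using q_pos q_lt1 m(1) by (intro power_decreasing) auto
      hence "2 * K * q^m * \<bar>y\<bar> \<le> 2 * K * q^Suc n * \<bar>y\<bar>" using K_nn by (intro mult_right_mono mult_left_mono) auto
      finally show ?thesis .
    qed
    show ?thesis using Y t1 t2 by linarith
  qed
  ultimately show ?thesis by blast
qed


lemma U_diff_bdd: "\<bar>U (y+s) - U y\<bar> \<le> 2 * (M0 / (1 - lam)) + K * \<bar>s\<bar>"
proof -
  have "\<bar>Wb (y+s)\<bar> \<le> M0 / (1 - lam)" "\<bar>Wb y\<bar> \<le> M0 / (1 - lam)" by (rule W_bdd)+
  moreover have "\<bar>V (y+s) - V y\<bar> \<le> K * \<bar>s\<bar>" using V_lip[of "y+s" y] by simp
  ultimately show ?thesis unfolding U_def by linarith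
qed

lemma U_isCont: "isCont U x"
  using U_cont continuous_on_eq_continuous_at open_UNIV by blast

lemma limit:
  fixes s c \<kappa> \<rho> :: "nat \<Rightarrow> real"
  assumes s: "\<And>n. 1 \<le> \<bar>s n\<bar> \<and> \<bar>s n\<bar> \<le> real b"
  and est: "\<And>n y. \<bar>U (y + s n) - U y - (U (s n) - U 0) - c n * y\<bar> \<le> \<kappa> n * y^2 + \<rho> n * \<bar>y\<bar>"
  and k0: "\<kappa> \<longlonglongrightarrow> 0" and r0: "\<rho> \<longlonglongrightarrow> 0"
  shows "\<exists>\<sigma>. \<sigma> \<noteq> 0 \<and> (\<forall>y. U (y+\<sigma>) - U y = U \<sigma> - U 0)"
proof -
  define S where "S = {-real b..-1} \<union> {1..real b}"
  have cS: "compact S" unfolding S_def by (intro compact_Un compact_Icc)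
  have sS: "s n \<in> S" for n using s[of n] unfolding S_def by auto
  obtain \<sigma> r where \<sigma>S: "\<sigma> \<in> S" and r: "strict_mono r" and lim: "(s \<circ> r) \<longlonglongrightarrow> \<sigma>"
    using compact_imp_seq_compact[OF cS] sS unfolding seq_compact_def by meson
  have \<sigma>0: "\<sigma> \<noteq> 0" using \<sigma>S unfolding S_def by auto
  define D where "D y = U (y+\<sigma>) - U y - (U \<sigma> - U 0)" for y
  define Dn where "Dn n y = U (y + s (r n)) - U y - (U (s (r n)) - U 0)" for n y
  have Dlim: "(\<lambda>n. Dn n y) \<longlonglongrightarrow> D y" for y
  proof -
    have l1: "(\<lambda>n. y + s (r n)) \<longlonglongrightarrow> y + \<sigma>" using lim by (intro tendsto_intros) (simp add: o_def)
    have l2: "(\<lambda>n. s (r n)) \<longlonglongrightarrow> \<sigma>" using lim by (simp add: o_def)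
    have "(\<lambda>n. U (y + s (r n))) \<longlonglongrightarrow> U (y+\<sigma>)" by (rule isCont_tendsto_compose[OF U_isCont l1])
    moreover have "(\<lambda>n. U (s (r n))) \<longlonglongrightarrow> U \<sigma>" by (rule isCont_tendsto_compose[OF U_isCont l2])
    ultimately show ?thesis unfolding Dn_def D_def by (intro tendsto_intros)
  qed
  have kr: "(\<lambda>n. \<kappa> (r n)) \<longlonglongrightarrow> 0" using LIMSEQ_subseq_LIMSEQ[OF k0 r] by (simp add: o_def)
  have rr: "(\<lambda>n. \<rho> (r n)) \<longlonglongrightarrow> 0" using LIMSEQ_subseq_LIMSEQ[OF r0 r] by (simp add: o_def)
  have err: "(\<lambda>n. Dn n y - c (r n) * y) \<longlonglongrightarrow> 0" for y
  proof (rule Lim_null_comparison)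
    show "\<forall>\<^sub>F n in sequentially. norm (Dn n y - c (r n) * y) \<le> \<kappa> (r n) * y^2 + \<rho> (r n) * \<bar>y\<bar>"
      using est unfolding Dn_def by simp
    show "(\<lambda>n. \<kappa> (r n) * y^2 + \<rho> (r n) * \<bar>y\<bar>) \<longlonglongrightarrow> 0"
      using tendsto_add[OF tendsto_mult_left_zero[OF kr] tendsto_mult_left_zero[OF rr]] by simp
  qed
  have cl: "(\<lambda>n. c (r n) * y) \<longlonglongrightarrow> D y" for y
  proof -
    have "(\<lambda>n. Dn n y - (Dn n y - c (r n) * y)) \<longlonglongrightarrow> D y - 0" by (intro tendsto_intros Dlim err)
    thus ?thesis by simp
  qed
  have c1: "(\<lambda>n. c (r n)) \<longlonglongrightarrow> D 1" using cl[of 1] by simp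
  have Dlin: "D y = D 1 * y" for y
    using LIMSEQ_unique[OF cl[of y] tendsto_mult_right[OF c1, of y]] .
  define B0 where "B0 = 2 * (2 * (M0 / (1 - lam)) + K * \<bar>\<sigma>\<bar>)"
  have Dbd: "\<bar>D y\<bar> \<le> B0" for y
    using U_diff_bdd[of y \<sigma>] U_diff_bdd[of 0 \<sigma>] unfolding D_def B0_def by simp
  have "D 1 = 0"
  proof (rule ccontr)
    assume nz: "D 1 \<noteq> 0"
    have B0nn: "B0 \<ge> 0" using Dbd[of 0] by linarith
    define y where "y = (B0 + 1) / \<bar>D 1\<bar>"
    have "\<bar>D 1 * y\<bar> = B0 + 1" using nz B0nn unfolding y_def by (simp add: abs_mult)
    hence "\<bar>D y\<bar> = B0 + 1" by (metis Dlin)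
    with Dbd[of y] show False by simp
  qed
  hence "\<forall>y. D y = 0" by (metis Dlin mult_zero_left)
  thus ?thesis using \<sigma>0 unfolding D_def by (intro exI[of _ \<sigma>]) auto
qed


lemma U_shift_b: "U (y + \<omega> / real b) - U y = lam * (U (real b * y + \<omega>) - U (real b * y))"
proof -
  have "real b * (y + \<omega> / real b) = real b * y + \<omega>" using bpos by (simp add: field_simps)
  thus ?thesis using U_eq[of "y + \<omega> / real b"] U_eq[of y] by (simp add: algebra_simps)
qed

lemma U_const:
  assumes \<sigma>0: "\<sigma> \<noteq> 0" and P: "\<forall>y. U (y+\<sigma>) - U y = U \<sigma> - U 0"
  shows "U x = U 0"
proof -
  define d where "d = U \<sigma> - U 0"
  define \<tau> where "\<tau> = \<sigma> / real b"
  have st: "U (y+\<tau>) - U y = lam * d" for y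
    unfolding \<tau>_def U_shift_b using P d_def by simp
  have mk: "U (y + real k * \<tau>) - U y = real k * (lam * d)" for k y
  proof (induction k)
    case 0 then show ?case by simp
  next
    case (Suc k)
    have "U (y + real (Suc k) * \<tau>) - U y = (U ((y + real k * \<tau>) + \<tau>) - U (y + real k * \<tau>)) + (U (y + real k * \<tau>) - U y)"
      by (simp add: algebra_simps)
    also have "\<dots> = lam * d + real k * (lam * d)" using st Suc by simp
    finally show ?case by (simp add: algebra_simps)
  qed
  have bt: "real b * \<tau> = \<sigma>" using bpos by (simp add: \<tau>_def)
  have "U (0 + real b * \<tau>) - U 0 = real b * (lam * d)" by (rule mk)
  hence "U \<sigma> - U 0 = real b * (lam * d)" using bt by simp
  hence "d = real b * (lam * d)" by (simp add: d_def)
  hence "d * (lam * real b - 1) = 0" by (simp add: algebra_simps)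
  hence d0: "d = 0" using lamb by simp
  have per: "U (y + \<sigma> / real b ^ m) = U y" for m y
  proof (induction m arbitrary: y)
    case 0 then show ?case using P d0 d_def by simp
  next
    case (Suc m)
    have "\<sigma> / real b ^ Suc m = (\<sigma> / real b ^ m) / real b" by simp
    hence "U (y + \<sigma> / real b ^ Suc m) - U y = lam * (U (real b * y + \<sigma> / real b ^ m) - U (real b * y))"
      using U_shift_b[of y "\<sigma> / real b ^ m"] by (simp add: mult.commute)
    also have "\<dots> = 0" using Suc by simp
    finally show ?case by simp
  qed
  have pernat: "U (y + real k * (\<sigma> / real b ^ m)) = U y" for k m y
  proof (induction k)
    case 0 then show ?case by simp
  next
    case (Suc k)
    have "y + real (Suc k) * (\<sigma> / real b ^ m) = (y + real k * (\<sigma> / real b ^ m)) + \<sigma> / real b ^ m"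
      by (simp add: distrib_right add_divide_distrib)
    hence "U (y + real (Suc k) * (\<sigma> / real b ^ m)) = U ((y + real k * (\<sigma> / real b ^ m)) + \<sigma> / real b ^ m)"
      by (rule arg_cong)
    also have "\<dots> = U (y + real k * (\<sigma> / real b ^ m))" by (rule per)
    finally show ?case using Suc by simp
  qed
  have perint: "U (of_int k * (\<sigma> / real b ^ m)) = U 0" for k m
  proof (cases "k \<ge> 0")
    case True
    then have "of_int k * (\<sigma> / real b ^ m) = 0 + real (nat k) * (\<sigma> / real b ^ m)" by simp
    then show ?thesis using pernat[of 0 "nat k" m] by metis
  next
    case False
    then have "0 = of_int k * (\<sigma> / real b ^ m) + real (nat (-k)) * (\<sigma> / real b ^ m)"
      by (simp add: distrib_right[symmetric])
    then show ?thesis using pernat[of "of_int k * (\<sigma> / real b ^ m)" "nat (-k)" m] by metis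
  qed
  show ?thesis
  proof (rule ccontr)
    assume ne: "U x \<noteq> U 0"
    define \<epsilon> where "\<epsilon> = \<bar>U x - U 0\<bar>"
    have ep: "\<epsilon> > 0" using ne by (simp add: \<epsilon>_def)
    obtain \<delta> where \<delta>: "\<delta> > 0" "\<forall>x'. dist x' x < \<delta> \<longrightarrow> dist (U x') (U x) < \<epsilon>"
      using U_cont ep unfolding continuous_on_iff by blast
    obtain m where m: "\<bar>\<sigma>\<bar> / \<delta> < real b ^ m" using real_arch_pow[OF bpos] by blast
    define \<omega> where "\<omega> = \<sigma> / real b ^ m"
    have bm: "real b ^ m > 0" using bpos by simp
    have \<omega>0: "\<omega> \<noteq> 0" using \<sigma>0 bm by (simp add: \<omega>_def)
    have \<omega>\<delta>: "\<bar>\<omega>\<bar> < \<delta>" using m \<delta>(1) bm by (simp add: \<omega>_def abs_divide field_simps)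
    define k where "k = \<lfloor>x / \<omega>\<rfloor>"
    have f1: "\<omega> * frac (x / \<omega>) = \<omega> * (x / \<omega>) - \<omega> * of_int k"
      unfolding frac_def k_def by (simp add: right_diff_distrib)
    have f2: "\<omega> * (x / \<omega>) = x" using \<omega>0 by simp
    have f3: "0 \<le> frac (x / \<omega>)" "frac (x / \<omega>) \<le> 1"
      using frac_ge_0[of "x/\<omega>"] frac_lt_1[of "x/\<omega>"] by auto
    have "\<bar>x - of_int k * \<omega>\<bar> = \<bar>\<omega> * frac (x / \<omega>)\<bar>" using f1 f2 by (simp add: mult.commute)
    also have "\<dots> = \<bar>\<omega>\<bar> * frac (x / \<omega>)" using f3 by (simp add: abs_mult)
    also have "\<dots> \<le> \<bar>\<omega>\<bar>" using f3 by (intro mult_left_le) auto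
    finally have "\<bar>x - of_int k * \<omega>\<bar> < \<delta>" using \<omega>\<delta> by linarith
    hence "dist (of_int k * \<omega>) x < \<delta>" by (simp add: dist_real_def abs_minus_commute)
    hence "dist (U (of_int k * \<omega>)) (U x) < \<epsilon>" using \<delta>(2) by blast
    moreover have "U (of_int k * \<omega>) = U 0" unfolding \<omega>_def by (rule perint)
    ultimately show False by (simp add: \<epsilon>_def dist_real_def abs_minus_commute)
  qed
qed

lemma W_lip_from_const:
  assumes "\<And>x. U x = U 0"
  shows "K-lipschitz_on UNIV Wb"
proof (rule lipschitz_onI)
  have Wv: "Wb x = U 0 - V x" for x using assms[of x] by (simp add: U_def)
  fix x y :: real
  show "dist (Wb x) (Wb y) \<le> K * dist x y"
    using V_lip[of y x] unfolding Wv dist_real_def by (simp add: abs_minus_commute)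
next
  show "K \<ge> 0" by (rule K_nn)
qed

end

theorem mainTheorem5:
  fixes b :: nat and lam :: real and \<phi> :: "real \<Rightarrow> real"
  assumes "b \<ge> 2"
    and "1 / real b < lam" and "lam < 1"
    and "\<forall>x. \<phi> (x + 1) = \<phi> x"
    and "\<exists>L. L-lipschitz_on UNIV \<phi>"
    and "\<not> (\<exists>L. L-lipschitz_on UNIV (W \<phi> lam (real b)))"
  shows "\<exists>t0 > 0. \<exists>C0 > 0. \<forall>t. t \<noteq> 0 \<and> regulating_period 2 (W \<phi> lam (real b)) t \<longrightarrow>
           \<bar>t\<bar> > t0 \<or>
           E 2 (W \<phi> lam (real b)) t * ereal (\<bar>t\<bar> powr (2 + log (real b) lam)) \<ge> ereal C0"
proof -
  obtain L where lipL: "L-lipschitz_on UNIV \<phi>" using assms(5) by blast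
  interpret WS b lam \<phi> L using assms lipL by unfold_locales auto
  show ?thesis
  proof (rule ccontr)
    assume H: "\<not> ?thesis"
    have ex: "\<exists>t. t \<noteq> 0 \<and> regulating_period 2 Wb t \<and> \<bar>t\<bar> \<le> 1 / real b ^ Suc n \<and>
        E 2 Wb t * ereal (\<bar>t\<bar> powr (2 + log (real b) lam)) < ereal (1 / real (Suc n))" for n
    proof -
      have t0: "1 / real b ^ Suc n > 0" using bpos by simp
      have c0: "1 / real (Suc n) > 0" by simp
      from H t0 c0 obtain t where t1: "t \<noteq> 0" "regulating_period 2 Wb t"
        and t2: "\<not> (\<bar>t\<bar> > 1 / real b ^ Suc n \<or> E 2 Wb t * ereal (\<bar>t\<bar> powr (2 + log (real b) lam)) \<ge> ereal (1 / real (Suc n)))"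
        by blast
      from t2 have "\<bar>t\<bar> \<le> 1 / real b ^ Suc n" by (simp add: not_less)
      moreover from t2 have "E 2 Wb t * ereal (\<bar>t\<bar> powr (2 + log (real b) lam)) < ereal (1 / real (Suc n))"
        using not_le by blast
      ultimately show ?thesis using t1 by blast
    qed
    have "\<exists>s c. 1 \<le> \<bar>s\<bar> \<and> \<bar>s\<bar> \<le> real b \<and> (\<forall>y. \<bar>U (y+s) - U y - (U s - U 0) - c*y\<bar> \<le> 1/(lam * real (Suc n)) * y^2 + 2*K*q^Suc n * \<bar>y\<bar>)" for n
      using ex[of n] step by blast
    then obtain s c where sc: "\<And>n. 1 \<le> \<bar>s n\<bar> \<and> \<bar>s n\<bar> \<le> real b \<and> (\<forall>y. \<bar>U (y + s n) - U y - (U (s n) - U 0) - c n * y\<bar> \<le> 1/(lam * real (Suc n)) * y^2 + 2*K*q^Suc n * \<bar>y\<bar>)"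
      by metis
    have k0: "(\<lambda>n. 1/(lam * real (Suc n))) \<longlonglongrightarrow> 0"
    proof -
      have "(\<lambda>n. (1/lam) * inverse (real (Suc n))) \<longlonglongrightarrow> 0"
        by (intro tendsto_mult_right_zero LIMSEQ_inverse_real_of_nat)
      moreover have "(\<lambda>n. (1/lam) * inverse (real (Suc n))) = (\<lambda>n. 1/(lam * real (Suc n)))"
        by (auto simp: divide_inverse inverse_mult_distrib)
      ultimately show ?thesis by simp
    qed
    have r0: "(\<lambda>n. 2*K*q^Suc n) \<longlonglongrightarrow> 0"
    proof -
      have "(\<lambda>n. (2*K*q) * q^n) \<longlonglongrightarrow> 0"
        using q_pos q_lt1 by (intro tendsto_mult_right_zero LIMSEQ_power_zero) auto
      thus ?thesis by (simp add: mult.assoc)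
    qed
    obtain \<sigma> where "\<sigma> \<noteq> 0" "\<forall>y. U (y+\<sigma>) - U y = U \<sigma> - U 0"
      using limit[of s c "\<lambda>n. 1/(lam * real (Suc n))" "\<lambda>n. 2*K*q^Suc n"] sc k0 r0 by blast
    then have "\<And>x. U x = U 0" using U_const by blast
    hence "K-lipschitz_on UNIV Wb" by (rule W_lip_from_const)
    with assms(6) show False by blast
  qed
qed

end
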